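(* Let $a<b$ be real numbers, let $X:=C_0[a,b]:=\{v\in C[a,b]\mid v(a)=v(b)=0\}$, let $g\in C[a,b]$ with $g\neq 0$, let $s\geq 2$ be an integer and let $p\in[1,\infty]$. Equip $X$ with the norm $\|\cdot\|_p$ (the $L^p(a,b)$-norm, with $\|\cdot\|_\infty$ the supremum norm). Then $$\lim_{h\in X,\ \|h\|_p\to 0}\ \frac{1}{\|h\|_p}\int_a^b g\,h^s=0 \quad\Longleftrightarrow\quad p\geq s .$$
   Context: Integrals $\int_a^b \varphi$ denote the Riemann integral $\int_a^b\varphi(x)\,dx$. The limit is taken over $h\in X\setminus\{0\}$ with $\|h\|_p\to 0$. *)

theory Defs
  imports "HOL-Analysis.Analysis"
begin

text \<open>The space C_0[a,b]: continuous functions on [a,b] vanishing at both endpoints.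
  Functions are represented as real-valued functions on the reals; only their values
  on [a,b] matter.\<close>
definition C0 :: "real \<Rightarrow> real \<Rightarrow> (real \<Rightarrow> real) set" where
  "C0 a b = {v. continuous_on {a..b} v \<and> v a = 0 \<and> v b = 0}"

definition Lp_norm :: "real \<Rightarrow> real \<Rightarrow> ereal \<Rightarrow> (real \<Rightarrow> real) \<Rightarrow> real" where
  "Lp_norm a b p h =
     (if p = \<infinity> then (SUP x\<in>{a..b}. \<bar>h x\<bar>)
      else (integral {a..b} (\<lambda>x. \<bar>h x\<bar> powr real_of_ereal p)) powr (1 / real_of_ereal p))"

end

theory Submission
  imports Defs
begin

lemma C0_cont: "h \<in> C0 a b \<Longrightarrow> continuous_on {a..b} h"
  by (simp add: C0_def)

lemma int_gh:
  fixes g h :: "real \<Rightarrow> real"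
  assumes "continuous_on {a..b} g" "continuous_on {a..b} h"
  shows "(\<lambda>x. g x * h x ^ s) integrable_on {a..b}"
  by (rule integrable_continuous_interval) (intro continuous_intros assms)

lemma int_powr:
  fixes h :: "real \<Rightarrow> real" and P :: real
  assumes "continuous_on {a..b} h" "P > 0"
  shows "(\<lambda>x. \<bar>h x\<bar> powr P) integrable_on {a..b}"
proof -
  have "continuous_on {a..b} (\<lambda>x. \<bar>h x\<bar> powr P)"
    by (rule continuous_on_powr'[where g="\<lambda>x. P"]) (use assms in \<open>auto intro: continuous_intros\<close>)
  then show ?thesis by (rule integrable_continuous_interval)
qed

lemma Lp_nonneg:
  assumes "a \<le> b" "continuous_on {a..b} h"
  shows "0 \<le> Lp_norm a b p h"
proof (cases "p = \<infinity>")
  case True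
  have "bounded (h ` {a..b})" by (rule compact_imp_bounded, rule compact_continuous_image) (use assms in auto)
  then have "bdd_above ((\<lambda>x. \<bar>h x\<bar>) ` {a..b})"
    by (auto simp: bounded_pos bdd_above_def) 
  then have "\<bar>h a\<bar> \<le> (SUP x\<in>{a..b}. \<bar>h x\<bar>)"
    using assms(1) by (intro cSUP_upper) auto
  then show ?thesis using True by (simp add: Lp_norm_def)
qed (simp add: Lp_norm_def)

lemma eps_delta:
  fixes N :: "'h \<Rightarrow> real"
  assumes "K > 0" "(s::nat) \<ge> 2"
    and "\<And>h. h \<in> A \<Longrightarrow> 0 \<le> N h \<and> (0 < N h \<longrightarrow> \<bar>I h\<bar> \<le> K * N h ^ s)"
  shows "\<forall>\<epsilon>>0. \<exists>\<delta>>0. \<forall>h\<in>A. Q h \<and> N h < \<delta> \<longrightarrow> \<bar>(1 / N h) * I h\<bar> < \<epsilon>"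
proof (intro allI impI)
  fix \<epsilon> :: real assume e: "\<epsilon> > 0"
  obtain k where sk: "s = Suc (Suc k)" using assms(2) by (metis add_2_eq_Suc le_Suc_ex)
  show "\<exists>\<delta>>0. \<forall>h\<in>A. Q h \<and> N h < \<delta> \<longrightarrow> \<bar>(1 / N h) * I h\<bar> < \<epsilon>"
  proof (intro exI[of _ "min 1 (\<epsilon> / K)"] conjI ballI impI)
    show "0 < min 1 (\<epsilon> / K)" using e assms by auto
    fix h assume h: "h \<in> A" "Q h \<and> N h < min 1 (\<epsilon> / K)"
    show "\<bar>(1 / N h) * I h\<bar> < \<epsilon>"
    proof (cases "N h = 0")
      case True then show ?thesis using e by simp
    next
      case False
      with assms(3)[OF h(1)] have pos: "0 < N h" and b: "\<bar>I h\<bar> \<le> K * N h ^ s" by auto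
      have le1: "N h * N h ^ k \<le> N h"
      proof -
        have "N h * N h ^ k \<le> N h * 1" using pos h(2)
          by (intro mult_left_mono power_le_one) auto
        then show ?thesis by simp
      qed
      have "\<bar>(1 / N h) * I h\<bar> = \<bar>I h\<bar> / N h" using pos by simp
      also have "\<dots> \<le> K * N h ^ s / N h" using b pos by (simp add: divide_right_mono)
      also have "\<dots> = K * (N h * N h ^ k)" using pos sk by simp
      also have "\<dots> \<le> K * N h" using le1 assms(1) by simp
      also have "\<dots> < \<epsilon>" using h(2) assms(1) by (simp add: pos_less_divide_eq mult.commute)
      finally show ?thesis .
    qed
  qed
qed


lemma pw_young:
  fixes y c \<theta> :: real
  assumes "0 \<le> y" "0 < c" "0 < \<theta>" "\<theta> \<le> 1"
  shows "y powr \<theta> \<le> c powr (\<theta> - 1) * (\<theta> * y + (1 - \<theta>) * c)"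
proof (cases "y = 0")
  case True then show ?thesis using assms by (simp add: mult_nonneg_nonneg)
next
  case False
  then have "y powr \<theta> * c powr (1 - \<theta>) \<le> \<theta> * y + (1 - \<theta>) * c"
    using assms by (intro Youngs_inequality_0) auto
  then have "c powr (\<theta> - 1) * (y powr \<theta> * c powr (1 - \<theta>)) \<le> c powr (\<theta> - 1) * (\<theta> * y + (1 - \<theta>) * c)"
    by (intro mult_left_mono) auto
  moreover have "c powr (\<theta> - 1) * (y powr \<theta> * c powr (1 - \<theta>)) = y powr \<theta>"
    using assms by (simp add: powr_add[symmetric] mult.assoc mult.left_commute[of "c powr _"])
  ultimately show ?thesis by simp
qed

lemma abs_pow_powr:
  fixes x P :: real and s :: nat
  assumes "P > 0" "s \<ge> 1"
  shows "\<bar>x\<bar> ^ s = (\<bar>x\<bar> powr P) powr (real s / P)"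
proof (cases "x = 0")
  case True then show ?thesis using assms by simp
next
  case False
  then have "(\<bar>x\<bar> powr P) powr (real s / P) = \<bar>x\<bar> powr (real s)"
    using assms by (simp add: powr_powr)
  also have "\<dots> = \<bar>x\<bar> ^ s" using False by (simp add: powr_realpow)
  finally show ?thesis by simp
qed

lemma gbound:
  fixes g :: "real \<Rightarrow> real"
  assumes "continuous_on {a..b} g"
  obtains M where "M > 0" "\<And>x. x \<in> {a..b} \<Longrightarrow> \<bar>g x\<bar> \<le> M"
proof -
  have "bounded (g ` {a..b})" by (rule compact_imp_bounded, rule compact_continuous_image) (use assms in auto)
  then obtain M where "M > 0" "\<forall>y\<in>g ` {a..b}. norm y \<le> M" by (auto simp: bounded_pos)
  then show ?thesis using that by auto
qed


lemma upper_inf: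
  fixes g :: "real \<Rightarrow> real"
  assumes "a < b" "continuous_on {a..b} g"
  shows "\<exists>K>0. \<forall>h\<in>C0 a b. 0 \<le> Lp_norm a b \<infinity> h \<and> (0 < Lp_norm a b \<infinity> h \<longrightarrow>
     \<bar>integral {a..b} (\<lambda>x. g x * h x ^ s)\<bar> \<le> K * Lp_norm a b \<infinity> h ^ s)"
proof -
  obtain M where M: "M > 0" "\<And>x. x \<in> {a..b} \<Longrightarrow> \<bar>g x\<bar> \<le> M" using gbound[OF assms(2)] by blast
  show ?thesis
  proof (intro exI[of _ "M * (b - a)"] conjI ballI impI)
    show "0 < M * (b - a)" using M assms by simp
    fix h assume h: "h \<in> C0 a b"
    have hc: "continuous_on {a..b} h" using h by (rule C0_cont)
    show "0 \<le> Lp_norm a b \<infinity> h" using Lp_nonneg[OF _ hc] assms by simp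
    define N where "N = Lp_norm a b \<infinity> h"
    have "bounded (h ` {a..b})" by (rule compact_imp_bounded, rule compact_continuous_image) (use hc in auto)
    then have bdd: "bdd_above ((\<lambda>x. \<bar>h x\<bar>) ` {a..b})"
      by (auto simp: bounded_pos bdd_above_def)
    have hN: "\<bar>h x\<bar> \<le> N" if "x \<in> {a..b}" for x
      unfolding N_def Lp_norm_def using that bdd by (simp, intro cSUP_upper) auto
    have "norm (integral {a..b} (\<lambda>x. g x * h x ^ s)) \<le> integral {a..b} (\<lambda>x. M * N ^ s)"
    proof (rule integral_norm_bound_integral)
      show "(\<lambda>x. g x * h x ^ s) integrable_on {a..b}" by (rule int_gh[OF assms(2) hc])
      show "(\<lambda>x. M * N ^ s) integrable_on {a..b}" by (rule integrable_const_ivl)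
      fix x assume x: "x \<in> {a..b}"
      have "\<bar>g x * h x ^ s\<bar> = \<bar>g x\<bar> * \<bar>h x\<bar> ^ s" by (simp add: abs_mult power_abs)
      also have "\<dots> \<le> M * N ^ s"
        using M(2)[OF x] hN[OF x] by (intro mult_mono power_mono) auto
      finally show "norm (g x * h x ^ s) \<le> M * N ^ s" by simp
    qed
    also have "\<dots> = M * (b - a) * N ^ s" using assms by simp
    finally show "\<bar>integral {a..b} (\<lambda>x. g x * h x ^ s)\<bar> \<le> M * (b - a) * Lp_norm a b \<infinity> h ^ s"
      by (simp add: N_def)
  qed
qed

lemma upper_fin:
  fixes g :: "real \<Rightarrow> real" and P :: real
  assumes "a < b" "continuous_on {a..b} g" "s \<ge> 2" "real s \<le> P"
  shows "\<exists>K>0. \<forall>h\<in>C0 a b. 0 \<le> Lp_norm a b (ereal P) h \<and> (0 < Lp_norm a b (ereal P) h \<longrightarrow>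
     \<bar>integral {a..b} (\<lambda>x. g x * h x ^ s)\<bar> \<le> K * Lp_norm a b (ereal P) h ^ s)"
proof -
  obtain M where M: "M > 0" "\<And>x. x \<in> {a..b} \<Longrightarrow> \<bar>g x\<bar> \<le> M" using gbound[OF assms(2)] by blast
  define \<theta> where "\<theta> = real s / P"
  have P0: "P > 0" using assms by simp
  have th: "0 < \<theta>" "\<theta> \<le> 1" using assms P0 by (auto simp: \<theta>_def)
  show ?thesis
  proof (intro exI[of _ "M * (b - a) powr (1 - \<theta>)"] conjI ballI impI)
    show "0 < M * (b - a) powr (1 - \<theta>)" using M assms by simp
    fix h assume h: "h \<in> C0 a b"
    have hc: "continuous_on {a..b} h" using h by (rule C0_cont)
    show "0 \<le> Lp_norm a b (ereal P) h" using Lp_nonneg[OF _ hc] assms by simp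
    define J where "J = integral {a..b} (\<lambda>x. \<bar>h x\<bar> powr P)"
    have NJ: "Lp_norm a b (ereal P) h = J powr (1 / P)" by (simp add: Lp_norm_def J_def)
    assume Npos: "0 < Lp_norm a b (ereal P) h"
    have J0: "J \<ge> 0" unfolding J_def by (rule integral_nonneg) (use int_powr[OF hc P0] in auto)
    have Jpos: "J > 0" using Npos J0 NJ by (cases "J = 0") auto
    define c where "c = J / (b - a)"
    have c0: "c > 0" using Jpos assms by (simp add: c_def)
    have Jc: "J = c * (b - a)" using assms by (simp add: c_def)
    define A where "A = M * c powr (\<theta> - 1)"
    have hJ: "((\<lambda>x. \<bar>h x\<bar> powr P) has_integral J) {a..b}"
      unfolding J_def using int_powr[OF hc P0] by (rule integrable_integral)
    have hR: "((\<lambda>x. A * (\<theta> * \<bar>h x\<bar> powr P + (1 - \<theta>) * c)) has_integral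
               A * (\<theta> * J + (b - a) * ((1 - \<theta>) * c))) {a..b}"
      using has_integral_mult_right[OF has_integral_add[OF has_integral_mult_right[OF hJ, of \<theta>]
              has_integral_const_real[of "(1 - \<theta>) * c" a b]], of A] assms
      by simp
    have "norm (integral {a..b} (\<lambda>x. g x * h x ^ s)) \<le>
          integral {a..b} (\<lambda>x. A * (\<theta> * \<bar>h x\<bar> powr P + (1 - \<theta>) * c))"
    proof (rule integral_norm_bound_integral)
      show "(\<lambda>x. g x * h x ^ s) integrable_on {a..b}" by (rule int_gh[OF assms(2) hc])
      show "(\<lambda>x. A * (\<theta> * \<bar>h x\<bar> powr P + (1 - \<theta>) * c)) integrable_on {a..b}"
        using hR by blast
      fix x assume x: "x \<in> {a..b}"
      have "\<bar>g x * h x ^ s\<bar> = \<bar>g x\<bar> * \<bar>h x\<bar> ^ s" by (simp add: abs_mult power_abs)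
      also have "\<dots> = \<bar>g x\<bar> * (\<bar>h x\<bar> powr P) powr \<theta>"
        using abs_pow_powr[OF P0, of s "h x"] assms by (simp add: \<theta>_def)
      also have "\<dots> \<le> M * (c powr (\<theta> - 1) * (\<theta> * \<bar>h x\<bar> powr P + (1 - \<theta>) * c))"
        using M(2)[OF x] pw_young[OF _ c0 th, of "\<bar>h x\<bar> powr P"] by (intro mult_mono) auto
      finally show "norm (g x * h x ^ s) \<le> A * (\<theta> * \<bar>h x\<bar> powr P + (1 - \<theta>) * c)"
        by (simp add: A_def mult.assoc)
    qed
    also have "\<dots> = A * (\<theta> * J + (b - a) * ((1 - \<theta>) * c))" using hR by (rule integral_unique)
    also have "\<dots> = M * c powr (\<theta> - 1) * c * (b - a)"
      unfolding A_def Jc by (simp add: algebra_simps)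
    also have "\<dots> = M * c powr \<theta> * (b - a)"
      using c0 by (simp add: powr_diff)
    also have "\<dots> = M * (b - a) powr (1 - \<theta>) * Lp_norm a b (ereal P) h ^ s"
    proof -
      have "Lp_norm a b (ereal P) h ^ s = J powr \<theta>"
        using NJ J0 Jpos P0 by (simp add: powr_realpow[symmetric] powr_powr \<theta>_def)
      also have "\<dots> = c powr \<theta> * (b - a) powr \<theta>" using Jc c0 assms by (simp add: powr_mult)
      finally have "Lp_norm a b (ereal P) h ^ s = c powr \<theta> * (b - a) powr \<theta>" .
      moreover have "(b - a) powr (1 - \<theta>) * (b - a) powr \<theta> = b - a"
        using assms by (simp add: powr_add[symmetric])
      ultimately show ?thesis by (metis (no_types, lifting) mult.commute mult.left_commute)
    qed
    finally show "\<bar>integral {a..b} (\<lambda>x. g x * h x ^ s)\<bar> \<le> M * (b - a) powr (1 - \<theta>) * Lp_norm a b (ereal P) h ^ s"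
      by simp
  qed
qed


lemma sign_interval:
  fixes g :: "real \<Rightarrow> real"
  assumes "a < b" "continuous_on {a..b} g" "\<exists>x\<in>{a..b}. g x \<noteq> 0"
  obtains u v \<sigma> c where "a \<le> u" "u < v" "v \<le> b" "c > 0" "\<sigma> = 1 \<or> \<sigma> = -1"
    "\<And>x. x \<in> {u..v} \<Longrightarrow> \<sigma> * g x \<ge> c"
proof -
  obtain x0 where x0: "x0 \<in> {a..b}" "g x0 \<noteq> 0" using assms(3) by blast
  define e where "e = \<bar>g x0\<bar> / 2"
  have e0: "e > 0" using x0 by (simp add: e_def)
  obtain d where d: "d > 0" "\<And>x. x \<in> {a..b} \<Longrightarrow> dist x x0 < d \<Longrightarrow> dist (g x) (g x0) < e"
    using assms(2) x0(1) e0 unfolding continuous_on_iff by metis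
  define u where "u = max a (x0 - d/2)"
  define v where "v = min b (x0 + d/2)"
  define \<sigma> :: real where "\<sigma> = (if g x0 > 0 then 1 else -1)"
  have sg: "\<sigma> * g x0 = \<bar>g x0\<bar>" using x0 by (auto simp: \<sigma>_def)
  show ?thesis
  proof (rule that[of u v e \<sigma>])
    show "a \<le> u" "v \<le> b" by (auto simp: u_def v_def)
    show "u < v" using assms(1) x0(1) d(1) by (auto simp: u_def v_def)
    show "e > 0" by (rule e0)
    show "\<sigma> = 1 \<or> \<sigma> = -1" by (auto simp: \<sigma>_def)
    fix x assume x: "x \<in> {u..v}"
    then have xab: "x \<in> {a..b}" and "dist x x0 < d" using d(1) by (auto simp: u_def v_def dist_real_def)
    then have "\<bar>g x - g x0\<bar> < e" using d(2) by (auto simp: dist_real_def)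
    moreover have "\<sigma> * g x = \<bar>g x0\<bar> + \<sigma> * (g x - g x0)" using sg by (simp add: algebra_simps)
    moreover have "\<bar>\<sigma> * (g x - g x0)\<bar> = \<bar>g x - g x0\<bar>" by (auto simp: \<sigma>_def)
    ultimately show "\<sigma> * g x \<ge> e" unfolding e_def by linarith
  qed
qed

lemma int_upper:
  fixes f :: "real \<Rightarrow> real"
  assumes "continuous_on {c..d} f" "\<And>x. x \<notin> {c..d} \<Longrightarrow> f x = 0" "{c..d} \<subseteq> {a..b}" "c \<le> d"
    "\<And>x. x \<in> {c..d} \<Longrightarrow> f x \<le> B"
  shows "integral {a..b} f \<le> B * (d - c)"
proof -
  have i: "f integrable_on {c..d}" using assms(1) by (rule integrable_continuous_interval)
  have "(f has_integral integral {c..d} f) {a..b}"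
    by (rule has_integral_on_superset[OF integrable_integral[OF i] assms(2) assms(3)])
  then have "integral {a..b} f = integral {c..d} f" by (rule integral_unique)
  also have "\<dots> \<le> integral {c..d} (\<lambda>x. B)" by (rule integral_le[OF i]) (use assms(5) in auto)
  also have "\<dots> = B * (d - c)" using assms(4) by simp
  finally show ?thesis .
qed

lemma int_lower:
  fixes f :: "real \<Rightarrow> real"
  assumes "f integrable_on {a..b}" "continuous_on {c..d} f" "{c..d} \<subseteq> {a..b}" "c \<le> d"
    "\<And>x. x \<in> {a..b} \<Longrightarrow> 0 \<le> f x" "\<And>x. x \<in> {c..d} \<Longrightarrow> B \<le> f x"
  shows "B * (d - c) \<le> integral {a..b} f"
proof -
  have i: "f integrable_on {c..d}" using assms(2) by (rule integrable_continuous_interval)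
  have "B * (d - c) = integral {c..d} (\<lambda>x. B)" using assms(4) by simp
  also have "\<dots> \<le> integral {c..d} f" by (rule integral_le[OF _ i]) (use assms(6) in auto)
  also have "\<dots> \<le> integral {a..b} f" by (rule integral_subset_le[OF assms(3) i assms(1)]) (use assms(5) in auto)
  finally show ?thesis .
qed


lemma lower:
  fixes g :: "real \<Rightarrow> real" and P :: real
  assumes ab: "a < b" and gc: "continuous_on {a..b} g" and gnz: "\<exists>x\<in>{a..b}. g x \<noteq> 0"
    and s2: "s \<ge> 2" and P1: "1 \<le> P" and Ps: "P < real s"
  shows "\<exists>\<epsilon>>0. \<forall>\<delta>>0. \<exists>h\<in>C0 a b. (\<exists>x\<in>{a..b}. h x \<noteq> 0) \<and> Lp_norm a b (ereal P) h < \<delta> \<and>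
           \<epsilon> \<le> \<bar>(1 / Lp_norm a b (ereal P) h) * integral {a..b} (\<lambda>x. g x * h x ^ s)\<bar>"
proof -
  obtain u v \<sigma> c0 where uv: "a \<le> u" "u < v" "v \<le> b" and c0: "c0 > 0" and sig: "\<sigma> = 1 \<or> \<sigma> = -1"
    and sg: "\<And>x. x \<in> {u..v} \<Longrightarrow> \<sigma> * g x \<ge> c0"
    using sign_interval[OF ab gc gnz] by metis
  define e where "e = 1 / P - 1 / real s"
  have P0: "P > 0" using P1 by simp
  have e0: "e > 0" using P0 Ps by (simp add: e_def frac_less2)
  define m where "m = (u + v) / 2"
  show ?thesis
  proof (intro exI[of _ "c0 / 2 ^ s"] conjI allI impI)
    show "0 < c0 / 2 ^ s" using c0 by simp
    fix \<delta> :: real assume d0: "\<delta> > 0"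
    define t where "t = (min \<delta> 1 / 4) powr (1 / e)"
    have t0: "t > 0" using d0 by (simp add: t_def)
    define w where "w = min (min 1 ((v - u) / 2)) t"
    have w0: "w > 0" and w1: "w \<le> 1" and wuv: "w \<le> (v - u) / 2" and wt: "w \<le> t"
      using t0 uv by (auto simp: w_def min_def)
    define H where "H = w powr (- 1 / real s)"
    have H0: "H > 0" using w0 by (simp add: H_def)
    define h where "h = (\<lambda>x::real. H * max 0 (1 - \<bar>x - m\<bar> / w))"
    have hcont: "continuous_on S h" for S
      unfolding h_def by (intro continuous_intros) (use w0 in auto)
    have hnn: "0 \<le> h x" for x using H0 by (simp add: h_def)
    have hle: "h x \<le> H" for x
    proof -
      have "max 0 (1 - \<bar>x - m\<bar> / w) \<le> 1" using w0 by auto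
      then show ?thesis unfolding h_def using H0 by (simp add: mult_left_le)
    qed
    have hzero: "h x = 0" if "\<bar>x - m\<bar> \<ge> w" for x
    proof -
      from that have "\<bar>x - m\<bar> / w \<ge> 1" using w0 by simp
      then show ?thesis by (simp add: h_def)
    qed
    have hout: "h x = 0" if "x \<notin> {m - w..m + w}" for x
      using that by (intro hzero) auto
    have hin: "h x \<ge> H / 2" if "x \<in> {m - w/2..m + w/2}" for x
    proof -
      have "\<bar>x - m\<bar> \<le> w / 2" using that by (intro abs_leI) auto
      then have "\<bar>x - m\<bar> / w \<le> 1 / 2" using w0 by (simp add: divide_le_eq)
      then have "1 - \<bar>x - m\<bar> / w \<ge> 1 / 2" by linarith
      then have "max 0 (1 - \<bar>x - m\<bar> / w) \<ge> 1 / 2" by (rule max.coboundedI2)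
      then have "H * (1 / 2) \<le> H * max 0 (1 - \<bar>x - m\<bar> / w)" by (rule mult_left_mono) (use H0 in simp)
      then show ?thesis unfolding h_def by simp
    qed
    have um1: "u \<le> m - w" using wuv unfolding m_def by (simp add: field_simps)
    have um2: "m + w \<le> v" using wuv unfolding m_def by (simp add: field_simps)
    note um = um1 um2
    have sub1: "{m - w..m + w} \<subseteq> {u..v}" using um by auto
    have sub2: "{m - w/2..m + w/2} \<subseteq> {m - w..m + w}" using w0 by auto
    have subab: "{u..v} \<subseteq> {a..b}" using uv by auto
    have hC0: "h \<in> C0 a b"
    proof -
      have "\<bar>a - m\<bar> \<ge> w" "\<bar>b - m\<bar> \<ge> w" using um uv by (smt (verit))+
      then show ?thesis using hzero hcont by (auto simp: C0_def)
    qed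
    have hm: "h m = H" using w0 by (simp add: h_def)
    have mab: "m \<in> {a..b}" using uv by (auto simp: m_def)
    define J where "J = integral {a..b} (\<lambda>x. \<bar>h x\<bar> powr P)"
    define N where "N = Lp_norm a b (ereal P) h"
    have NJ: "N = J powr (1 / P)" by (simp add: N_def Lp_norm_def J_def)
    have pcont: "continuous_on S (\<lambda>x. \<bar>h x\<bar> powr P)" for S
      by (rule continuous_on_powr'[where g="\<lambda>x. P"]) (use P0 hcont in \<open>auto intro: continuous_intros\<close>)
    have Jup: "J \<le> H powr P * (2 * w)"
    proof -
      have "J \<le> H powr P * ((m + w) - (m - w))" unfolding J_def
      proof (rule int_upper[OF pcont])
        show "\<And>x. x \<notin> {m - w..m + w} \<Longrightarrow> \<bar>h x\<bar> powr P = 0" using hout by simp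
        show "{m - w..m + w} \<subseteq> {a..b}" using sub1 subab by blast
        show "m - w \<le> m + w" using w0 by simp
        show "\<And>x. x \<in> {m - w..m + w} \<Longrightarrow> \<bar>h x\<bar> powr P \<le> H powr P"
          using hle hnn P0 by (intro powr_mono2) auto
      qed
      moreover have "(m + w) - (m - w) = 2 * w" by simp
      ultimately show ?thesis by simp
    qed
    have Jlow: "(H / 2) powr P * w \<le> J"
    proof -
      have "(H / 2) powr P * ((m + w/2) - (m - w/2)) \<le> J" unfolding J_def
      proof (rule int_lower[OF _ pcont])
        show "(\<lambda>x. \<bar>h x\<bar> powr P) integrable_on {a..b}" by (rule int_powr[OF hcont P0])
        show "{m - w/2..m + w/2} \<subseteq> {a..b}" using sub1 sub2 subab by blast
        show "m - w/2 \<le> m + w/2" using w0 by simp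
        show "\<And>x. x \<in> {a..b} \<Longrightarrow> 0 \<le> \<bar>h x\<bar> powr P" by simp
        show "\<And>x. x \<in> {m - w/2..m + w/2} \<Longrightarrow> (H/2) powr P \<le> \<bar>h x\<bar> powr P"
          using hin H0 P0 hnn by (intro powr_mono2) (auto simp: abs_of_nonneg)
      qed
      moreover have "(m + w/2) - (m - w/2) = w" by simp
      ultimately show ?thesis by simp
    qed
    have "(H/2) powr P > 0" using H0 by simp
    then have "0 < (H/2) powr P * w" using w0 by simp
    then have Jpos: "J > 0" using Jlow by linarith
    have Npos: "N > 0" using Jpos NJ by simp
    have Hs: "H ^ s = 1 / w"
    proof -
      have "H ^ s = H powr real s" using H0 by (simp add: powr_realpow)
      also have "\<dots> = w powr (-1)"
      proof -
        have "real s \<noteq> 0" using s2 by simp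
        then show ?thesis by (simp add: H_def powr_powr)
      qed
      also have "\<dots> = 1 / w" using w0 by (simp add: powr_neg_one)
      finally show ?thesis .
    qed
    have Nup: "N \<le> 2 * w powr e"
    proof -
      have "N \<le> (H powr P * (2 * w)) powr (1 / P)"
        unfolding NJ using Jup Jpos P0 by (intro powr_mono2) auto
      also have "\<dots> = H * (2 powr (1/P) * w powr (1/P))"
        using H0 w0 P0 by (simp add: powr_mult powr_powr)
      also have "\<dots> = 2 powr (1/P) * w powr e"
      proof -
        have "e = -1 / real s + 1 / P" by (simp add: e_def)
        then have "w powr e = w powr (-1 / real s + 1 / P)" by (rule arg_cong)
        also have "\<dots> = H * w powr (1 / P)" unfolding H_def by (rule powr_add)
        finally have "w powr e = H * w powr (1 / P)" .
        then show ?thesis by simp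
      qed
      also have "\<dots> \<le> 2 * w powr e"
      proof -
        have "2 powr (1/P) \<le> 2 powr 1" using P1 by (intro powr_mono) auto
        then show ?thesis by (intro mult_right_mono) auto
      qed
      finally show ?thesis .
    qed
    have we: "w powr e \<le> min \<delta> 1 / 4"
    proof -
      have "w powr e \<le> t powr e" using w0 wt e0 by (intro powr_mono2) auto
      also have "\<dots> = min \<delta> 1 / 4" using d0 e0 by (simp add: t_def powr_powr)
      finally show ?thesis .
    qed
    have "min \<delta> 1 \<le> \<delta>" "min \<delta> 1 \<le> 1" by auto
    then have Nd: "N < \<delta>" and Nhalf: "N \<le> 1 / 2" using Nup we d0 by linarith+
    define I where "I = integral {a..b} (\<lambda>x. g x * h x ^ s)"
    have sI: "c0 * (H / 2) ^ s * w \<le> \<sigma> * I"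
    proof -
      have "c0 * (H / 2) ^ s * ((m + w/2) - (m - w/2)) \<le> integral {a..b} (\<lambda>x. \<sigma> * g x * h x ^ s)"
      proof (rule int_lower)
        show "(\<lambda>x. \<sigma> * g x * h x ^ s) integrable_on {a..b}"
          by (rule integrable_continuous_interval) (intro continuous_intros gc hcont)
        have "continuous_on {a..b} (\<lambda>x. \<sigma> * g x * h x ^ s)"
          by (intro continuous_intros gc hcont)
        then show "continuous_on {m - w/2..m + w/2} (\<lambda>x. \<sigma> * g x * h x ^ s)"
          by (rule continuous_on_subset) (use sub1 sub2 subab in blast)
        show "{m - w/2..m + w/2} \<subseteq> {a..b}" using sub1 sub2 subab by blast
        show "m - w/2 \<le> m + w/2" using w0 by simp
        fix x
        show "0 \<le> \<sigma> * g x * h x ^ s" if "x \<in> {a..b}"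
        proof (cases "x \<in> {u..v}")
          case True then show ?thesis using sg[OF True] c0 hnn by (intro mult_nonneg_nonneg[of "\<sigma> * g x"]) auto
        next
          case False then have "h x = 0" using hout sub1 by blast
          moreover have "s \<noteq> 0" using s2 by simp
          ultimately show ?thesis by (simp add: power_0_left)
        qed
        show "c0 * (H / 2) ^ s \<le> \<sigma> * g x * h x ^ s" if x: "x \<in> {m - w/2..m + w/2}"
        proof -
          have "x \<in> {u..v}" using x sub1 sub2 by blast
          then have "c0 \<le> \<sigma> * g x" by (rule sg)
          moreover have "(H / 2) ^ s \<le> h x ^ s" using hin[OF x] H0 by (intro power_mono) auto
          ultimately show ?thesis using c0 H0 by (intro mult_mono[of c0]) auto
        qed
      qed
      moreover have "integral {a..b} (\<lambda>x. \<sigma> * g x * h x ^ s) = \<sigma> * I"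
        unfolding I_def by (simp add: mult.assoc)
      moreover have "(m + w/2) - (m - w/2) = w" by simp
      ultimately show ?thesis by simp
    qed
    have "c0 * (H / 2) ^ s * w = c0 / 2 ^ s"
      using w0 Hs by (simp add: power_divide field_simps)
    with sI have sI2: "c0 / 2 ^ s \<le> \<bar>I\<bar>" using sig by auto
    have "c0 / 2 ^ s \<le> \<bar>I\<bar> / N"
    proof -
      have "c0 / 2 ^ s * 1 \<le> \<bar>I\<bar> * 2" using sI2 c0 by simp
      also have "\<dots> = \<bar>I\<bar> / (1 / 2)" by simp
      also have "\<dots> \<le> \<bar>I\<bar> / N" using Nhalf Npos by (intro divide_left_mono) auto
      finally show ?thesis by simp
    qed
    then have fin: "c0 / 2 ^ s \<le> \<bar>(1 / Lp_norm a b (ereal P) h) * integral {a..b} (\<lambda>x. g x * h x ^ s)\<bar>"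
      using Npos by (simp add: N_def[symmetric] I_def[symmetric] abs_mult)
    show "\<exists>h\<in>C0 a b. (\<exists>x\<in>{a..b}. h x \<noteq> 0) \<and> Lp_norm a b (ereal P) h < \<delta> \<and> c0 / 2 ^ s \<le> \<bar>(1 / Lp_norm a b (ereal P) h) * integral {a..b} (\<lambda>x. g x * h x ^ s)\<bar>"
    proof -
      have nz: "\<exists>x\<in>{a..b}. h x \<noteq> 0" using mab hm H0 by (intro bexI[of _ m]) auto
      show ?thesis using hC0 nz Nd fin unfolding N_def by blast
    qed
  qed
qed


theorem lemma1:
  fixes a b :: real and g :: "real \<Rightarrow> real" and s :: nat and p :: ereal
  assumes "a < b"
    and "continuous_on {a..b} g"
    and "\<exists>x\<in>{a..b}. g x \<noteq> 0"
    and "s \<ge> 2"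
    and "1 \<le> p"
  shows "(\<forall>\<epsilon>>0. \<exists>\<delta>>0. \<forall>h\<in>C0 a b.
            (\<exists>x\<in>{a..b}. h x \<noteq> 0) \<and> Lp_norm a b p h < \<delta> \<longrightarrow>
              \<bar>(1 / Lp_norm a b p h) * integral {a..b} (\<lambda>x. g x * h x ^ s)\<bar> < \<epsilon>)
         \<longleftrightarrow> p \<ge> ereal (real s)"
proof
  assume L: "\<forall>\<epsilon>>0. \<exists>\<delta>>0. \<forall>h\<in>C0 a b.
            (\<exists>x\<in>{a..b}. h x \<noteq> 0) \<and> Lp_norm a b p h < \<delta> \<longrightarrow>
              \<bar>(1 / Lp_norm a b p h) * integral {a..b} (\<lambda>x. g x * h x ^ s)\<bar> < \<epsilon>"
  show "p \<ge> ereal (real s)"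
  proof (rule ccontr)
    assume "\<not> p \<ge> ereal (real s)"
    then have ps: "p < ereal (real s)" by simp
    then obtain P where pP: "p = ereal P" using assms(5) by (cases p) auto
    have P1: "1 \<le> P" and Ps: "P < real s" using ps assms(5) pP by auto
    obtain \<epsilon> where e: "\<epsilon> > 0" and E: "\<forall>\<delta>>0. \<exists>h\<in>C0 a b. (\<exists>x\<in>{a..b}. h x \<noteq> 0) \<and> Lp_norm a b (ereal P) h < \<delta> \<and>
           \<epsilon> \<le> \<bar>(1 / Lp_norm a b (ereal P) h) * integral {a..b} (\<lambda>x. g x * h x ^ s)\<bar>"
      using lower[OF assms(1-4) P1 Ps] by blast
    obtain \<delta> where d: "\<delta> > 0" and D: "\<forall>h\<in>C0 a b.
            (\<exists>x\<in>{a..b}. h x \<noteq> 0) \<and> Lp_norm a b p h < \<delta> \<longrightarrow>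
              \<bar>(1 / Lp_norm a b p h) * integral {a..b} (\<lambda>x. g x * h x ^ s)\<bar> < \<epsilon>"
      using L e by blast
    from E d obtain h where "h \<in> C0 a b" "(\<exists>x\<in>{a..b}. h x \<noteq> 0)" "Lp_norm a b (ereal P) h < \<delta>"
      "\<epsilon> \<le> \<bar>(1 / Lp_norm a b (ereal P) h) * integral {a..b} (\<lambda>x. g x * h x ^ s)\<bar>" by blast
    with D pP show False by force
  qed
next
  assume ps: "p \<ge> ereal (real s)"
  have K: "\<exists>K>0. \<forall>h\<in>C0 a b. 0 \<le> Lp_norm a b p h \<and> (0 < Lp_norm a b p h \<longrightarrow>
     \<bar>integral {a..b} (\<lambda>x. g x * h x ^ s)\<bar> \<le> K * Lp_norm a b p h ^ s)"
  proof (cases p)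
    case (real P)
    then have "real s \<le> P" using ps by simp
    then show ?thesis using upper_fin[OF assms(1,2,4)] real by blast
  next
    case PInf
    then show ?thesis using upper_inf[OF assms(1,2)] by simp
  next
    case MInf
    then show ?thesis using assms(5) by simp
  qed
  then obtain K where "K > 0" and KK: "\<forall>h\<in>C0 a b. 0 \<le> Lp_norm a b p h \<and> (0 < Lp_norm a b p h \<longrightarrow>
     \<bar>integral {a..b} (\<lambda>x. g x * h x ^ s)\<bar> \<le> K * Lp_norm a b p h ^ s)" by blast
  show "\<forall>\<epsilon>>0. \<exists>\<delta>>0. \<forall>h\<in>C0 a b.
            (\<exists>x\<in>{a..b}. h x \<noteq> 0) \<and> Lp_norm a b p h < \<delta> \<longrightarrow>
              \<bar>(1 / Lp_norm a b p h) * integral {a..b} (\<lambda>x. g x * h x ^ s)\<bar> < \<epsilon>"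
    by (rule eps_delta[OF \<open>K > 0\<close> assms(4)]) (use KK in blast)
qed

end
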